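(* Let $(\log\rho_i)_{i\in\mathbb Z}$ be i.i.d. real random variables with $\mathbb P[\log\rho_0>0]>0$ and $\mathbb P[\log\rho_0<0]>0$, and let $V$ be the associated random walk defined below. Let $h>0$. Then the process $\big(V[m_1(h)-k]-V[m_1(h)],\ 0\le k\le m_1(h)-{}^{\uparrow}T_h(h)\big)$ conditioned on $\{{}^{\uparrow}T_h(h)\ge0\}$ has the same law as $\big(V(-k),\ 0\le k\le T_{V(-\cdot)}([h,+\infty[)\big)$ conditioned on $\{T_{V(-\cdot)}([h,+\infty[)<T_{V(-\cdot)}(]-\infty,0])\}$.
   Context: $V(x)=\sum_{k=1}^x\log\rho_k$ for $x>0$, $V(0)=0$, $V(x)=-\sum_{k=x+1}^0\log\rho_k$ for $x<0$. $V^\uparrow(x)=\max_{0\le i\le j\le x}[V(j)-V(i)]$ for $x\in\mathbb N$; $T^\uparrow(h)=\min\{x\ge0:V^\uparrow(x)\ge h\}$; $m_1(h)=\min\{x\ge0:V(x)=\min_{[0,T^\uparrow(h)]}V\}$; ${}^{\uparrow}T_h(y)=\max\{x\in\mathbb Z:x\le m_1(h),\ V(x)-V(m_1(h))\ge y\}$ with $\max\emptyset=-\infty$. For $A\subset\mathbb R$, $T_{V(-\cdot)}(A)=\min\{x\ge1:V(-x)\in A\}$. *)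

theory Defs
  imports "HOL-Probability.Probability"
begin

text \<open>Throughout, r :: int => real plays the role of the environment (log rho_k)_k.\<close>

definition Vw :: "(int \<Rightarrow> real) \<Rightarrow> int \<Rightarrow> real" where
  "Vw r x = (if x > 0 then (\<Sum>k\<in>{1..x}. r k)
             else if x = 0 then 0 else - (\<Sum>k\<in>{x+1..0}. r k))"

definition Vup :: "(int \<Rightarrow> real) \<Rightarrow> nat \<Rightarrow> real" where
  "Vup r x = Max {Vw r (int j) - Vw r (int i) | i j. i \<le> j \<and> j \<le> x}"

text \<open>T^up(h), meaningful when some x has Vup r x >= h (see hasTup).\<close>
definition hasTup :: "(int \<Rightarrow> real) \<Rightarrow> real \<Rightarrow> bool" where
  "hasTup r h = (\<exists>x. Vup r x \<ge> h)"

definition Tup :: "(int \<Rightarrow> real) \<Rightarrow> real \<Rightarrow> nat" where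
  "Tup r h = (LEAST x. Vup r x \<ge> h)"

definition m1 :: "(int \<Rightarrow> real) \<Rightarrow> real \<Rightarrow> nat" where
  "m1 r h = (LEAST x. Vw r (int x) = Min (Vw r ` int ` {0..Tup r h}))"

text \<open>upT r h y = the paper's {}^{up}T_h(y); None encodes -infinity (max of empty set).\<close>
definition upT :: "(int \<Rightarrow> real) \<Rightarrow> real \<Rightarrow> real \<Rightarrow> int option" where
  "upT r h y = (let S = {x::int. x \<le> int (m1 r h) \<and> Vw r x - Vw r (int (m1 r h)) \<ge> y}
                in if S = {} then None else Some (GREATEST x. x \<in> S))"

definition Tneg :: "(int \<Rightarrow> real) \<Rightarrow> real set \<Rightarrow> enat" where
  "Tneg r A = (if \<exists>x::nat. x \<ge> 1 \<and> Vw r (- int x) \<in> A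
               then enat (LEAST x::nat. x \<ge> 1 \<and> Vw r (- int x) \<in> A) else \<infinity>)"

definition event1 :: "(int \<Rightarrow> real) \<Rightarrow> real \<Rightarrow> bool" where
  "event1 r h = (hasTup r h \<and> (\<exists>t. upT r h h = Some t \<and> t \<ge> 0))"

definition len1 :: "(int \<Rightarrow> real) \<Rightarrow> real \<Rightarrow> nat" where
  "len1 r h = nat (int (m1 r h) - the (upT r h h))"

definition path1 :: "(int \<Rightarrow> real) \<Rightarrow> real \<Rightarrow> nat \<Rightarrow> real" where
  "path1 r h k = Vw r (int (m1 r h) - int k) - Vw r (int (m1 r h))"

definition event2 :: "(int \<Rightarrow> real) \<Rightarrow> real \<Rightarrow> bool" where
  "event2 r h = (Tneg r {h..} < Tneg r {..0})"

definition len2 :: "(int \<Rightarrow> real) \<Rightarrow> real \<Rightarrow> nat" where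
  "len2 r h = the_enat (Tneg r {h..})"

definition path2 :: "(int \<Rightarrow> real) \<Rightarrow> nat \<Rightarrow> real" where
  "path2 r k = Vw r (- int k)"

end

theory Submission
  imports Defs
begin

definition incr :: "(int \<Rightarrow> real) \<Rightarrow> int \<Rightarrow> int \<Rightarrow> real" where
  "incr r a b = (\<Sum>k\<in>{a<..b}. r k)"

lemma Vw_incr: "Vw r x = (if 0 \<le> x then incr r 0 x else - incr r x 0)"
proof -
  have 1: "{1..x} = {0<..x}" for x :: int by auto
  have 2: "{x+1..0} = {x<..0}" for x :: int by auto
  show ?thesis unfolding Vw_def incr_def 1 2 by auto
qed

lemma incr_split: "a \<le> b \<Longrightarrow> b \<le> c \<Longrightarrow> incr r a c = incr r a b + incr r b c"
proof -
  assume "a \<le> b" "b \<le> c"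
  then have "{a<..c} = {a<..b} \<union> {b<..c}" by auto
  then show ?thesis unfolding incr_def by (simp add: sum.union_disjoint)
qed

lemma incr_same[simp]: "incr r a a = 0" unfolding incr_def by simp

lemma Vw_diff: "a \<le> b \<Longrightarrow> Vw r b - Vw r a = incr r a b"
  unfolding Vw_incr using incr_split[of a 0 b r] incr_split[of a b 0 r] incr_split[of 0 a b r]
  by auto

lemma incr_shift: "incr (\<lambda>i. r (i + m)) a b = incr r (a + m) (b + m)"
  unfolding incr_def
  by (rule sum.reindex_bij_witness[of _ "\<lambda>i. i - m" "\<lambda>i. i + m"]) auto

lemma Vw_shift: "Vw (\<lambda>i. r (i + m)) x = Vw r (x + m) - Vw r m"
proof (cases "0 \<le> x")
  case True
  then show ?thesis using Vw_diff[of m "x+m" r] by (simp add: Vw_incr incr_shift)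
next
  case False
  then show ?thesis using Vw_diff[of "x+m" m r] by (simp add: Vw_incr incr_shift)
qed

lemma Vw_cong:
  assumes "\<And>k. (0 < k \<and> k \<le> x) \<or> (x < k \<and> k \<le> 0) \<Longrightarrow> r k = r' k"
  shows "Vw r x = Vw r' x"
  unfolding Vw_def using assms by (auto intro!: sum.cong)

lemma Vw_zero[simp]: "Vw r 0 = 0" unfolding Vw_def by simp

lemma Vup_set_finite: "finite {Vw r (int j) - Vw r (int i) | i j. i \<le> j \<and> j \<le> x}"
proof -
  have "{Vw r (int j) - Vw r (int i) | i j. i \<le> j \<and> j \<le> x} \<subseteq>
        (\<lambda>(i,j). Vw r (int j) - Vw r (int i)) ` ({..x} \<times> {..x})" by force
  then show ?thesis by (rule finite_subset) auto
qed

lemma Vup_ge: "i \<le> j \<Longrightarrow> j \<le> x \<Longrightarrow> Vw r (int j) - Vw r (int i) \<le> Vup r x"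
  unfolding Vup_def by (rule Max_ge[OF Vup_set_finite]) blast

lemma Vup_in: "\<exists>i j. i \<le> j \<and> j \<le> x \<and> Vup r x = Vw r (int j) - Vw r (int i)"
proof -
  have "Vup r x \<in> {Vw r (int j) - Vw r (int i) | i j. i \<le> j \<and> j \<le> x}"
    unfolding Vup_def by (rule Max_in[OF Vup_set_finite]) blast
  then show ?thesis by blast
qed

lemma rise_iff: "h \<le> Vup r x \<longleftrightarrow> (\<exists>i j. i \<le> j \<and> j \<le> x \<and> h \<le> Vw r (int j) - Vw r (int i))"
  using Vup_in[of x r] Vup_ge[of _ _ x r] by (metis order_trans)

lemma int_greatest:
  fixes S :: "int set"
  assumes "x \<in> S" "\<forall>y\<in>S. y \<le> b"
  shows "(GREATEST x. x \<in> S) \<in> S \<and> (\<forall>y\<in>S. y \<le> (GREATEST x. x \<in> S))"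
proof -
  let ?F = "S \<inter> {x..b}"
  have fin: "finite ?F" by simp
  have ne: "?F \<noteq> {}" using assms by auto
  define g where "g = Max ?F"
  have gS: "g \<in> S" using Max_in[OF fin ne] g_def by auto
  have ge: "\<forall>y\<in>S. y \<le> g"
  proof
    fix y assume "y \<in> S"
    show "y \<le> g"
    proof (cases "x \<le> y")
      case True then show ?thesis using \<open>y \<in> S\<close> assms Max_ge[OF fin] g_def by auto
    next
      case False
      have "x \<le> Max ?F" by (rule Max_ge[OF fin]) (use assms in auto)
      then show ?thesis using False g_def by simp
    qed
  qed
  have "(GREATEST x. x \<in> S) = g" using gS ge by (intro Greatest_equality) auto
  then show ?thesis using gS ge by simp
qed

definition Apre :: "(int \<Rightarrow> real) \<Rightarrow> real \<Rightarrow> nat \<Rightarrow> bool" where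
  "Apre r h t = (\<forall>i j::nat. i \<le> j \<longrightarrow> j \<le> t \<longrightarrow> Vw r (int j) - Vw r (int i) < h)"

definition Seg :: "(int \<Rightarrow> real) \<Rightarrow> real \<Rightarrow> nat \<Rightarrow> bool" where
  "Seg r h n = (1 \<le> n \<and> h \<le> Vw r (- int n) \<and>
     (\<forall>k::nat. 1 \<le> k \<longrightarrow> k < n \<longrightarrow> 0 < Vw r (- int k) \<and> Vw r (- int k) < h))"

definition Csuf :: "(int \<Rightarrow> real) \<Rightarrow> real \<Rightarrow> bool" where
  "Csuf r h = (\<exists>T::nat. h \<le> Vw r (int T) \<and> (\<forall>x::nat. x \<le> T \<longrightarrow> 0 \<le> Vw r (int x)))"

lemma event2_iff:
  assumes h: "h > 0"
  shows "(event2 r h \<and> len2 r h = n) \<longleftrightarrow> Seg r h n"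
proof
  assume a: "event2 r h \<and> len2 r h = n"
  have ex: "\<exists>x::nat. x \<ge> 1 \<and> Vw r (- int x) \<in> {h..}"
  proof (rule ccontr)
    assume "\<not> ?thesis"
    then have "Tneg r {h..} = \<infinity>" unfolding Tneg_def by auto
    then show False using a unfolding event2_def by simp
  qed
  define L where "L = (LEAST x::nat. x \<ge> 1 \<and> Vw r (- int x) \<in> {h..})"
  have TL: "Tneg r {h..} = enat L" unfolding Tneg_def L_def using ex by simp
  have nL: "n = L" using a unfolding len2_def TL by simp
  have L1: "L \<ge> 1 \<and> h \<le> Vw r (- int L)" using LeastI_ex[OF ex] unfolding L_def by simp
  have Lk: "Vw r (- int k) < h" if "1 \<le> k" "k < L" for k
    using not_less_Least[of k "\<lambda>x. x \<ge> 1 \<and> Vw r (- int x) \<in> {h..}"] that unfolding L_def by auto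
  have Lk0: "0 < Vw r (- int k)" if "1 \<le> k" "k < L" for k
  proof (rule ccontr)
    assume "\<not> ?thesis"
    then have ex0: "\<exists>x::nat. x \<ge> 1 \<and> Vw r (- int x) \<in> {..0}" using that by auto
    define L0 where "L0 = (LEAST x::nat. x \<ge> 1 \<and> Vw r (- int x) \<in> {..0})"
    have "Tneg r {..0} = enat L0" unfolding Tneg_def L0_def using ex0 by simp
    moreover have "L0 \<le> k" unfolding L0_def using \<open>\<not> 0 < Vw r (- int k)\<close> that
      by (intro Least_le) auto
    ultimately show False using a that unfolding event2_def TL by simp
  qed
  show "Seg r h n" unfolding Seg_def nL using L1 Lk Lk0 by auto
next
  assume s: "Seg r h n"
  have ex: "\<exists>x::nat. x \<ge> 1 \<and> Vw r (- int x) \<in> {h..}" using s unfolding Seg_def by auto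
  have Ln: "(LEAST x::nat. x \<ge> 1 \<and> Vw r (- int x) \<in> {h..}) = n"
  proof (rule Least_equality)
    show "n \<ge> 1 \<and> Vw r (- int n) \<in> {h..}" using s unfolding Seg_def by auto
  next
    fix y assume "y \<ge> 1 \<and> Vw r (- int y) \<in> {h..}"
    then show "n \<le> y" using s unfolding Seg_def by (meson atLeast_iff leI linorder_not_le)
  qed
  have TL: "Tneg r {h..} = enat n" unfolding Tneg_def using ex Ln by simp
  have "enat n < Tneg r {..0}"
  proof (cases "\<exists>x::nat. x \<ge> 1 \<and> Vw r (- int x) \<in> {..0}")
    case True
    define L0 where "L0 = (LEAST x::nat. x \<ge> 1 \<and> Vw r (- int x) \<in> {..0})"
    have T0: "Tneg r {..0} = enat L0" unfolding Tneg_def L0_def using True by simp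
    have "L0 \<ge> 1 \<and> Vw r (- int L0) \<le> 0" using LeastI_ex[OF True] unfolding L0_def by simp
    then have "n < L0" using s h unfolding Seg_def
      by (metis linorder_not_le nat_less_le order.trans order_le_less_trans)
    then show ?thesis using T0 by simp
  next
    case False
    have "Tneg r {..0} = \<infinity>" using False unfolding Tneg_def by (rule if_not_P)
    then show ?thesis by simp
  qed
  then show "event2 r h \<and> len2 r h = n" unfolding event2_def len2_def TL by simp
qed

lemma Seg_shift_iff:
  assumes tm: "t < m"
  shows "Seg (\<lambda>i. r (i + int m)) h (m - t) \<longleftrightarrow>
    (h \<le> Vw r (int t) - Vw r (int m) \<and>
     (\<forall>x::nat. t < x \<longrightarrow> x < m \<longrightarrow> 0 < Vw r (int x) - Vw r (int m) \<and> Vw r (int x) - Vw r (int m) < h))"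
proof -
  have e: "Vw (\<lambda>i. r (i + int m)) (- int k) = Vw r (int (m - k)) - Vw r (int m)" if "k \<le> m" for k
    using that by (simp add: Vw_shift of_nat_diff)
  show ?thesis
  proof
    assume s: "Seg (\<lambda>i. r (i + int m)) h (m - t)"
    have 1: "h \<le> Vw r (int t) - Vw r (int m)" using s e[of "m - t"] tm unfolding Seg_def by simp
    have 2: "0 < Vw r (int x) - Vw r (int m) \<and> Vw r (int x) - Vw r (int m) < h"
      if "t < x" "x < m" for x
    proof -
      have k: "1 \<le> m - x" "m - x < m - t" "m - (m - x) = x" "m - x \<le> m" using that by auto
      have "0 < Vw (\<lambda>i. r (i + int m)) (- int (m - x)) \<and> Vw (\<lambda>i. r (i + int m)) (- int (m - x)) < h"
        using s k(1,2) unfolding Seg_def by blast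
      then show ?thesis using e[OF k(4)] k(3) by simp
    qed
    show "h \<le> Vw r (int t) - Vw r (int m) \<and>
     (\<forall>x::nat. t < x \<longrightarrow> x < m \<longrightarrow> 0 < Vw r (int x) - Vw r (int m) \<and> Vw r (int x) - Vw r (int m) < h)"
      using 1 2 by blast
  next
    assume s: "h \<le> Vw r (int t) - Vw r (int m) \<and>
     (\<forall>x::nat. t < x \<longrightarrow> x < m \<longrightarrow> 0 < Vw r (int x) - Vw r (int m) \<and> Vw r (int x) - Vw r (int m) < h)"
    have 1: "1 \<le> m - t" using tm by simp
    have 2: "h \<le> Vw (\<lambda>i. r (i + int m)) (- int (m - t))" using s e[of "m - t"] tm by simp
    have 3: "0 < Vw (\<lambda>i. r (i + int m)) (- int k) \<and> Vw (\<lambda>i. r (i + int m)) (- int k) < h"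
      if "1 \<le> k" "k < m - t" for k
    proof -
      have k: "t < m - k" "m - k < m" "k \<le> m" using that by auto
      have "0 < Vw r (int (m - k)) - Vw r (int m) \<and> Vw r (int (m - k)) - Vw r (int m) < h"
        using s k(1,2) by blast
      then show ?thesis using e[OF k(3)] by simp
    qed
    show "Seg (\<lambda>i. r (i + int m)) h (m - t)" unfolding Seg_def using 1 2 3 by blast
  qed
qed

lemma Csuf_shift_iff:
  "Csuf (\<lambda>i. r (i + int m)) h \<longleftrightarrow>
    (\<exists>T::nat. m \<le> T \<and> h \<le> Vw r (int T) - Vw r (int m) \<and>
        (\<forall>x::nat. m \<le> x \<longrightarrow> x \<le> T \<longrightarrow> Vw r (int m) \<le> Vw r (int x)))"
proof
  assume "Csuf (\<lambda>i. r (i + int m)) h"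
  then obtain T where T: "h \<le> Vw r (int T + int m) - Vw r (int m)"
    "\<forall>x::nat. x \<le> T \<longrightarrow> 0 \<le> Vw r (int x + int m) - Vw r (int m)"
    unfolding Csuf_def Vw_shift by blast
  show "\<exists>T::nat. m \<le> T \<and> h \<le> Vw r (int T) - Vw r (int m) \<and>
        (\<forall>x::nat. m \<le> x \<longrightarrow> x \<le> T \<longrightarrow> Vw r (int m) \<le> Vw r (int x))"
  proof (intro exI[of _ "T + m"] conjI allI impI)
    show "m \<le> T + m" by simp
    show "h \<le> Vw r (int (T + m)) - Vw r (int m)" using T by simp
    fix x assume "m \<le> x" "x \<le> T + m"
    then show "Vw r (int m) \<le> Vw r (int x)" using T(2)[rule_format, of "x - m"] by (simp add: of_nat_diff)
  qed
next
  assume "\<exists>T::nat. m \<le> T \<and> h \<le> Vw r (int T) - Vw r (int m) \<and>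
        (\<forall>x::nat. m \<le> x \<longrightarrow> x \<le> T \<longrightarrow> Vw r (int m) \<le> Vw r (int x))"
  then obtain T where T: "m \<le> T" "h \<le> Vw r (int T) - Vw r (int m)"
    "\<forall>x::nat. m \<le> x \<longrightarrow> x \<le> T \<longrightarrow> Vw r (int m) \<le> Vw r (int x)" by blast
  show "Csuf (\<lambda>i. r (i + int m)) h" unfolding Csuf_def Vw_shift
  proof (intro exI[of _ "T - m"] conjI allI impI)
    show "h \<le> Vw r (int (T - m) + int m) - Vw r (int m)" using T by (simp add: of_nat_diff)
    fix x assume "x \<le> T - m"
    then show "0 \<le> Vw r (int x + int m) - Vw r (int m)" using T(3)[rule_format, of "x + m"] T(1) by simp
  qed
qed

lemma core:
  assumes h: "h > 0" and tm: "t < m"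
  shows "(event1 r h \<and> upT r h h = Some (int t) \<and> m1 r h = m) \<longleftrightarrow>
         (Apre r h t \<and> Seg (\<lambda>i. r (i + int m)) h (m - t) \<and> Csuf (\<lambda>i. r (i + int m)) h)"
  unfolding Seg_shift_iff[OF tm] Csuf_shift_iff
proof
  assume a: "event1 r h \<and> upT r h h = Some (int t) \<and> m1 r h = m"
  have hT: "hasTup r h" using a unfolding event1_def by simp
  define T where "T = Tup r h"
  have exT: "\<exists>x. h \<le> Vup r x" using hT unfolding hasTup_def by simp
  have riseT: "h \<le> Vup r T" unfolding T_def Tup_def by (rule LeastI_ex[OF exT])
  have norise: "\<not> h \<le> Vup r y" if "y < T" for y
    using not_less_Least[of y "\<lambda>x. h \<le> Vup r x"] that unfolding T_def Tup_def by simp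
  define mn where "mn = Min (Vw r ` int ` {0..T})"
  have fin: "finite (Vw r ` int ` {0..T})" by simp
  have mnin: "mn \<in> Vw r ` int ` {0..T}" unfolding mn_def by (rule Min_in[OF fin]) simp
  then obtain x0 where x0: "x0 \<le> T" "Vw r (int x0) = mn" by auto
  have mn_le: "mn \<le> Vw r (int y)" if "y \<le> T" for y
    unfolding mn_def by (rule Min_le[OF fin]) (use that in auto)
  have m_def': "m = (LEAST x. Vw r (int x) = mn)" using a unfolding m1_def mn_def T_def by simp
  have Vm: "Vw r (int m) = mn" unfolding m_def' by (rule LeastI[of _ x0]) (use x0 in simp)
  have mT: "m \<le> T" using Least_le[of "\<lambda>x. Vw r (int x) = mn" x0] x0 m_def' by simp
  have lowT: "Vw r (int m) \<le> Vw r (int y)" if "y \<le> T" for y using mn_le[OF that] Vm by simp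
  have ltm: "Vw r (int m) < Vw r (int y)" if "y < m" for y
  proof -
    have "Vw r (int y) \<noteq> mn" using not_less_Least[of y "\<lambda>x. Vw r (int x) = mn"] that m_def' by simp
    then show ?thesis using lowT[of y] that mT Vm by simp
  qed
  define S where "S = {x::int. x \<le> int m \<and> h \<le> Vw r x - Vw r (int m)}"
  have upT_eq: "upT r h h = (if S = {} then None else Some (GREATEST x. x \<in> S))"
    unfolding upT_def S_def using a by (simp add: Let_def)
  have Sne: "S \<noteq> {}" using a upT_eq by (auto split: if_splits)
  then obtain x1 where x1: "x1 \<in> S" by auto
  have gr: "(GREATEST x. x \<in> S) \<in> S \<and> (\<forall>y\<in>S. y \<le> (GREATEST x. x \<in> S))"
    by (rule int_greatest[OF x1]) (auto simp: S_def)
  have Gt: "(GREATEST x. x \<in> S) = int t" using a upT_eq Sne by simp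
  have tS: "h \<le> Vw r (int t) - Vw r (int m)" using gr Gt unfolding S_def by simp
  have notS: "\<not> h \<le> Vw r (int x) - Vw r (int m)" if "t < x" "x \<le> m" for x :: nat
  proof
    assume "h \<le> Vw r (int x) - Vw r (int m)"
    then have "int x \<in> S" unfolding S_def using that by simp
    then show False using gr Gt that by auto
  qed
  have A: "Apre r h t" unfolding Apre_def
  proof (intro allI impI)
    fix i j :: nat assume "i \<le> j" "j \<le> t"
    have "Vw r (int j) - Vw r (int i) \<le> Vup r t" by (rule Vup_ge) fact+
    moreover have "\<not> h \<le> Vup r t" using norise tm mT by simp
    ultimately show "Vw r (int j) - Vw r (int i) < h" by simp
  qed
  have S2: "\<forall>x::nat. t < x \<longrightarrow> x < m \<longrightarrow> 0 < Vw r (int x) - Vw r (int m) \<and> Vw r (int x) - Vw r (int m) < h"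
    using ltm notS by force
  obtain i j where ij: "i \<le> j" "j \<le> T" "h \<le> Vw r (int j) - Vw r (int i)" using riseT rise_iff by blast
  have jT: "j = T"
  proof (rule ccontr)
    assume "j \<noteq> T"
    then have "j < T" using ij by simp
    then have "\<not> h \<le> Vup r j" by (rule norise)
    moreover have "h \<le> Vup r j" using rise_iff ij by blast
    ultimately show False by simp
  qed
  have CT: "h \<le> Vw r (int T) - Vw r (int m)" using ij jT lowT[of i] by simp
  show "Apre r h t \<and>
    (h \<le> Vw r (int t) - Vw r (int m) \<and>
     (\<forall>x. t < x \<longrightarrow> x < m \<longrightarrow> 0 < Vw r (int x) - Vw r (int m) \<and> Vw r (int x) - Vw r (int m) < h)) \<and>
    (\<exists>T. m \<le> T \<and> h \<le> Vw r (int T) - Vw r (int m) \<and> (\<forall>x. m \<le> x \<longrightarrow> x \<le> T \<longrightarrow> Vw r (int m) \<le> Vw r (int x)))"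
    using A tS S2 mT CT lowT by blast
next
  assume a: "Apre r h t \<and>
    (h \<le> Vw r (int t) - Vw r (int m) \<and>
     (\<forall>x. t < x \<longrightarrow> x < m \<longrightarrow> 0 < Vw r (int x) - Vw r (int m) \<and> Vw r (int x) - Vw r (int m) < h)) \<and>
    (\<exists>T. m \<le> T \<and> h \<le> Vw r (int T) - Vw r (int m) \<and> (\<forall>x. m \<le> x \<longrightarrow> x \<le> T \<longrightarrow> Vw r (int m) \<le> Vw r (int x)))"
  have A: "\<And>i j. i \<le> j \<Longrightarrow> j \<le> t \<Longrightarrow> Vw r (int j) - Vw r (int i) < h" using a unfolding Apre_def by blast
  have St: "h \<le> Vw r (int t) - Vw r (int m)" using a by blast
  have Sx: "\<And>x. t < x \<Longrightarrow> x < m \<Longrightarrow> 0 < Vw r (int x) - Vw r (int m) \<and> Vw r (int x) - Vw r (int m) < h"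
    using a by blast
  let ?P = "\<lambda>T. m \<le> T \<and> h \<le> Vw r (int T) - Vw r (int m) \<and> (\<forall>x. m \<le> x \<longrightarrow> x \<le> T \<longrightarrow> Vw r (int m) \<le> Vw r (int x))"
  have exP: "\<exists>T. ?P T" using a by blast
  define T0 where "T0 = (LEAST T. ?P T)"
  have PT0: "?P T0" unfolding T0_def by (rule LeastI_ex[OF exP])
  have notP: "\<not> ?P y" if "y < T0" for y using not_less_Least[of y ?P] that unfolding T0_def by simp
  have lowpre: "Vw r (int m) < Vw r (int i)" if "i \<le> t" for i
    using A[OF that order_refl] St by simp
  have low: "Vw r (int m) \<le> Vw r (int i)" if "i \<le> T0" for i
  proof -
    consider "i \<le> t" | "t < i" "i < m" | "m \<le> i" by linarith
    then show ?thesis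
    proof cases
      case 1 then show ?thesis using lowpre by force
    next
      case 2 then show ?thesis using Sx by force
    next
      case 3 then show ?thesis using PT0 that by blast
    qed
  qed
  have ltm: "Vw r (int m) < Vw r (int i)" if "i < m" for i
  proof -
    consider "i \<le> t" | "t < i" by linarith
    then show ?thesis
    proof cases
      case 1 then show ?thesis using lowpre by force
    next
      case 2 then show ?thesis using Sx that by force
    qed
  qed
  have below: "Vw r (int j) - Vw r (int m) < h" if "t < j" "j < T0" for j
  proof -
    consider "j < m" | "j = m" | "m < j" by linarith
    then show ?thesis
    proof cases
      case 1 then show ?thesis using Sx that by blast
    next
      case 2 then show ?thesis using h by simp
    next
      case 3
      have "\<forall>x. m \<le> x \<longrightarrow> x \<le> j \<longrightarrow> Vw r (int m) \<le> Vw r (int x)" using low that by simp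
      then show ?thesis using notP[OF that(2)] 3 by force
    qed
  qed
  have norise: "Vw r (int j) - Vw r (int i) < h" if "i \<le> j" "j < T0" for i j
  proof (cases "j \<le> t")
    case True then show ?thesis using A that by blast
  next
    case False
    then have "Vw r (int j) - Vw r (int m) < h" using below that by simp
    moreover have "Vw r (int m) \<le> Vw r (int i)" using low that by simp
    ultimately show ?thesis by simp
  qed
  have riseT0: "h \<le> Vup r T0" unfolding rise_iff using PT0 by blast
  have exT: "\<exists>x. h \<le> Vup r x" using riseT0 by blast
  have hT: "hasTup r h" unfolding hasTup_def using exT by blast
  have Tup_eq: "Tup r h = T0" unfolding Tup_def
  proof (rule Least_equality)
    show "h \<le> Vup r T0" by fact
  next
    fix y assume "h \<le> Vup r y"
    then obtain i j where "i \<le> j" "j \<le> y" "h \<le> Vw r (int j) - Vw r (int i)" using rise_iff by blast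
    then show "T0 \<le> y"
    proof -
      assume ij: "i \<le> j" "j \<le> y" "h \<le> Vw r (int j) - Vw r (int i)"
      show "T0 \<le> y"
      proof (rule ccontr)
        assume "\<not> T0 \<le> y"
        then have "j < T0" using ij by simp
        then show False using norise[OF ij(1)] ij(3) by fastforce
      qed
    qed
  qed
  have fin: "finite (Vw r ` int ` {0..T0})" by simp
  have mT0: "m \<le> T0" using PT0 by simp
  have Min_eq: "Min (Vw r ` int ` {0..T0}) = Vw r (int m)"
  proof (rule Min_eqI[OF fin])
    fix y assume "y \<in> Vw r ` int ` {0..T0}"
    then show "Vw r (int m) \<le> y" using low by auto
  next
    show "Vw r (int m) \<in> Vw r ` int ` {0..T0}" using mT0 by auto
  qed
  have m1_eq: "m1 r h = m" unfolding m1_def Tup_eq Min_eq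
  proof (rule Least_equality)
    fix y assume "Vw r (int y) = Vw r (int m)"
    then show "m \<le> y"
    proof -
      assume e: "Vw r (int y) = Vw r (int m)"
      show "m \<le> y"
      proof (rule ccontr)
        assume "\<not> m \<le> y"
        then have "y < m" by simp
        then show False using ltm[of y] e by simp
      qed
    qed
  qed simp
  define S where "S = {x::int. x \<le> int m \<and> h \<le> Vw r x - Vw r (int m)}"
  have tS: "int t \<in> S" unfolding S_def using St tm by simp
  have upT_eq: "upT r h h = (if S = {} then None else Some (GREATEST x. x \<in> S))"
    unfolding upT_def S_def m1_eq by (simp add: Let_def)
  have G: "(GREATEST x. x \<in> S) = int t"
  proof (rule Greatest_equality)
    show "int t \<in> S" by fact
  next
    fix y assume yS: "y \<in> S"
    show "y \<le> int t"
    proof (rule ccontr)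
      assume "\<not> y \<le> int t"
      then have "y = int (nat y)" "t < nat y" "nat y \<le> m" using yS unfolding S_def by auto
      then have hy: "h \<le> Vw r (int (nat y)) - Vw r (int m)" using yS unfolding S_def by simp
      consider "nat y < m" | "nat y = m" using \<open>nat y \<le> m\<close> by linarith
      then show False
      proof cases
        case 1 then show False using Sx[OF \<open>t < nat y\<close> 1] hy by simp
      next
        case 2 then show False using hy h by simp
      qed
    qed
  qed
  have upT_t: "upT r h h = Some (int t)" using upT_eq G tS by auto
  show "event1 r h \<and> upT r h h = Some (int t) \<and> m1 r h = m"
    unfolding event1_def using hT upT_t m1_eq by simp
qed

lemma comp_meas[measurable]: "(\<lambda>x. x k) \<in> borel_measurable (PiM I (\<lambda>_. (borel :: real measure)))"
proof (cases "k \<in> I")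
  case True then show ?thesis by (rule measurable_component_singleton)
next
  case False
  have "(\<lambda>x. undefined) \<in> borel_measurable (PiM I (\<lambda>_. (borel :: real measure)))" by simp
  then show ?thesis
    by (rule measurable_cong[THEN iffD1, rotated]) (use False in \<open>auto simp: space_PiM PiE_def extensional_def\<close>)
qed

lemma Vw_meas[measurable]: "(\<lambda>x. Vw x j) \<in> borel_measurable (PiM I (\<lambda>_. (borel :: real measure)))"
  unfolding Vw_def by measurable

lemma Vw_shift_meas[measurable]: "(\<lambda>x. Vw (\<lambda>i. x (i + m)) j) \<in> borel_measurable (PiM I (\<lambda>_. (borel :: real measure)))"
  unfolding Vw_shift by measurable

lemma Apre_meas[measurable]: "Measurable.pred (PiM I (\<lambda>_. (borel :: real measure))) (\<lambda>x. Apre x h t)"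
  unfolding Apre_def by measurable

lemma Seg_meas[measurable]: "Measurable.pred (PiM I (\<lambda>_. (borel :: real measure))) (\<lambda>x. Seg x h n)"
  unfolding Seg_def by measurable

lemma Seg_shift_meas[measurable]: "Measurable.pred (PiM I (\<lambda>_. (borel :: real measure))) (\<lambda>x. Seg (\<lambda>i. x (i + m)) h n)"
  unfolding Seg_def by measurable

lemma Csuf_meas[measurable]: "Measurable.pred (PiM I (\<lambda>_. (borel :: real measure))) (\<lambda>x. Csuf x h)"
  unfolding Csuf_def by measurable

lemma Csuf_shift_meas[measurable]: "Measurable.pred (PiM I (\<lambda>_. (borel :: real measure))) (\<lambda>x. Csuf (\<lambda>i. x (i + m)) h)"
  unfolding Csuf_def by measurable

lemma path_meas[measurable]: "(\<lambda>x. restrict (\<lambda>k. Vw x (- int k)) {0..n}) \<in> measurable (PiM I (\<lambda>_. (borel :: real measure))) (PiM {0..n} (\<lambda>_. borel))"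
  by (rule measurable_restrict) simp

lemma path_shift_meas[measurable]: "(\<lambda>x. restrict (\<lambda>k. Vw (\<lambda>i. x (i + m)) (- int k)) {0..n}) \<in> measurable (PiM I (\<lambda>_. (borel :: real measure))) (PiM {0..n} (\<lambda>_. borel))"
  by (rule measurable_restrict) simp

locale iidw = prob_space M for M :: "'a measure" +
  fixes X :: "int \<Rightarrow> 'a \<Rightarrow> real"
  assumes ind: "indep_vars (\<lambda>_. borel) X UNIV"
  and idd: "\<And>i. distr M borel (X i) = distr M borel (X 0)"
begin

lemma rv[measurable]: "X i \<in> borel_measurable M"
  using ind unfolding indep_vars_def by auto

lemma ind_shift: "indep_vars (\<lambda>_. borel) (\<lambda>i. X (i + m)) UNIV"
proof -
  have G: "indep_sets (\<lambda>i. {X i -` A \<inter> space M | A. A \<in> sets borel}) UNIV"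
    using ind unfolding indep_vars_def2 by simp
  have "indep_sets (\<lambda>i. {X (i + m) -` A \<inter> space M | A. A \<in> sets borel}) UNIV"
    unfolding indep_sets_def
  proof (intro conjI allI impI ballI)
    fix i :: int
    show "{X (i + m) -` A \<inter> space M | A. A \<in> sets borel} \<subseteq> events"
      using G unfolding indep_sets_def by blast
  next
    fix J :: "int set" and A
    assume J: "J \<subseteq> UNIV" "J \<noteq> {}" "finite J"
      and A: "A \<in> Pi J (\<lambda>i. {X (i + m) -` A \<inter> space M | A. A \<in> sets borel})"
    let ?J' = "(\<lambda>i. i + m) ` J"
    let ?A' = "\<lambda>k. A (k - m)"
    have A': "?A' \<in> Pi ?J' (\<lambda>i. {X i -` A \<inter> space M | A. A \<in> sets borel})"
    proof (rule Pi_I)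
      fix k assume "k \<in> ?J'"
      then obtain j where j: "j \<in> J" "k = j + m" by blast
      have "A j \<in> {X (j + m) -` A \<inter> space M | A. A \<in> sets borel}" by (rule Pi_mem[OF A j(1)])
      then show "?A' k \<in> {X k -` A \<inter> space M | A. A \<in> sets borel}" using j by simp
    qed
    have GG: "\<forall>J\<subseteq>UNIV. J \<noteq> {} \<longrightarrow> finite J \<longrightarrow> (\<forall>A\<in>Pi J (\<lambda>i. {X i -` A \<inter> space M | A. A \<in> sets borel}).
        prob (\<Inter>j\<in>J. A j) = (\<Prod>j\<in>J. prob (A j)))"
      using G unfolding indep_sets_def by blast
    have ne: "?J' \<noteq> {}" and fi: "finite ?J'" using J by auto
    have "prob (\<Inter>k\<in>?J'. ?A' k) = (\<Prod>k\<in>?J'. prob (?A' k))"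
      by (rule GG[rule_format, OF subset_UNIV ne fi A'])
    moreover have "(\<Inter>k\<in>?J'. ?A' k) = (\<Inter>j\<in>J. A j)" by auto
    moreover have "(\<Prod>k\<in>?J'. prob (?A' k)) = (\<Prod>j\<in>J. prob (A j))"
      by (subst prod.reindex) (auto simp: inj_on_def)
    ultimately show "prob (\<Inter>j\<in>J. A j) = (\<Prod>j\<in>J. prob (A j))" by simp
  qed
  note * = this
  show ?thesis unfolding indep_vars_def2
  proof (rule conjI)
    show "\<forall>i\<in>UNIV. random_variable borel (X (i + m))" using rv by simp
  qed (rule *)
qed

lemma distr_block:
  assumes "I \<noteq> {}"
  shows "distr M (PiM I (\<lambda>_. borel)) (\<lambda>\<omega>. \<lambda>i\<in>I. X (i + m) \<omega>) = PiM I (\<lambda>_. distr M borel (X 0))"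
proof -
  have iv: "indep_vars (\<lambda>_. borel) (\<lambda>i. X (i + m)) I"
    using ind_shift by (rule indep_vars_subset) simp
  have rvs: "\<And>i. random_variable borel (X (i + m))" by simp
  have "distr M (PiM I (\<lambda>_. borel)) (\<lambda>\<omega>. \<lambda>i\<in>I. X (i + m) \<omega>) = PiM I (\<lambda>i. distr M borel (X (i + m)))"
    using iffD1[OF indep_vars_iff_distr_eq_PiM[OF assms rvs] iv] .
  also have "\<dots> = PiM I (\<lambda>_. distr M borel (X 0))"
    by (rule PiM_cong) (rule refl, rule idd)
  finally show ?thesis .
qed

lemma shift_emeasure:
  assumes I: "I \<noteq> {}" and Q: "Q \<in> sets (PiM I (\<lambda>_. borel))"
  shows "emeasure M {\<omega>\<in>space M. (\<lambda>i\<in>I. X (i + m) \<omega>) \<in> Q} = emeasure M {\<omega>\<in>space M. (\<lambda>i\<in>I. X i \<omega>) \<in> Q}"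
proof -
  have f: "(\<lambda>\<omega>. \<lambda>i\<in>I. X (i + m') \<omega>) \<in> measurable M (PiM I (\<lambda>_. borel))" for m'
    by (rule measurable_restrict) simp
  have e: "emeasure M {\<omega>\<in>space M. (\<lambda>i\<in>I. X (i + m') \<omega>) \<in> Q} = emeasure (PiM I (\<lambda>_. distr M borel (X 0))) Q" for m'
  proof -
    have "emeasure M {\<omega>\<in>space M. (\<lambda>i\<in>I. X (i + m') \<omega>) \<in> Q}
      = emeasure (distr M (PiM I (\<lambda>_. borel)) (\<lambda>\<omega>. \<lambda>i\<in>I. X (i + m') \<omega>)) Q"
      by (subst emeasure_distr[OF f Q]) (auto intro!: arg_cong[where f="emeasure M"])
    then show ?thesis using distr_block[OF I] by simp
  qed
  show ?thesis using e[of m] e[of 0] by simp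
qed

lemma three_blocks:
  assumes D: "K0 \<inter> K1 = {}" "K0 \<inter> K2 = {}" "K1 \<inter> K2 = {}"
    and Q: "Q0 \<in> sets (PiM K0 (\<lambda>_. borel))" "Q1 \<in> sets (PiM K1 (\<lambda>_. borel))" "Q2 \<in> sets (PiM K2 (\<lambda>_. borel))"
  shows "emeasure M {\<omega>\<in>space M. (\<lambda>i\<in>K0. X i \<omega>) \<in> Q0 \<and> (\<lambda>i\<in>K1. X i \<omega>) \<in> Q1 \<and> (\<lambda>i\<in>K2. X i \<omega>) \<in> Q2}
    = emeasure M {\<omega>\<in>space M. (\<lambda>i\<in>K0. X i \<omega>) \<in> Q0} * emeasure M {\<omega>\<in>space M. (\<lambda>i\<in>K1. X i \<omega>) \<in> Q1}
      * emeasure M {\<omega>\<in>space M. (\<lambda>i\<in>K2. X i \<omega>) \<in> Q2}"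
proof -
  define K :: "nat \<Rightarrow> int set" where "K j = (if j = 0 then K0 else if j = 1 then K1 else K2)" for j
  define QQ :: "nat \<Rightarrow> (int \<Rightarrow> real) set" where "QQ j = (if j = 0 then Q0 else if j = 1 then Q1 else Q2)" for j
  have iv: "indep_vars (\<lambda>j. PiM (K j) (\<lambda>_. borel)) (\<lambda>j \<omega>. restrict (\<lambda>i. X i \<omega>) (K j)) {0,1,2}"
    by (rule indep_vars_restrict[OF ind]) (use D in \<open>auto simp: disjoint_family_on_def K_def\<close>)
  have "prob (\<Inter>j\<in>{0,1,2}. (\<lambda>\<omega>. restrict (\<lambda>i. X i \<omega>) (K j)) -` QQ j \<inter> space M)
     = (\<Prod>j\<in>{0,1,2}. prob ((\<lambda>\<omega>. restrict (\<lambda>i. X i \<omega>) (K j)) -` QQ j \<inter> space M))"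
    by (rule indep_varsD[OF iv]) (use Q in \<open>auto simp: K_def QQ_def\<close>)
  moreover have "(\<Inter>j\<in>{0,1,2}. (\<lambda>\<omega>. restrict (\<lambda>i. X i \<omega>) (K j)) -` QQ j \<inter> space M)
    = {\<omega>\<in>space M. (\<lambda>i\<in>K0. X i \<omega>) \<in> Q0 \<and> (\<lambda>i\<in>K1. X i \<omega>) \<in> Q1 \<and> (\<lambda>i\<in>K2. X i \<omega>) \<in> Q2}"
    by (auto simp: K_def QQ_def)
  moreover have "(\<Prod>j\<in>{0,1,2::nat}. prob ((\<lambda>\<omega>. restrict (\<lambda>i. X i \<omega>) (K j)) -` QQ j \<inter> space M))
    = prob {\<omega>\<in>space M. (\<lambda>i\<in>K0. X i \<omega>) \<in> Q0} * prob {\<omega>\<in>space M. (\<lambda>i\<in>K1. X i \<omega>) \<in> Q1}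
      * prob {\<omega>\<in>space M. (\<lambda>i\<in>K2. X i \<omega>) \<in> Q2}"
    by (simp add: K_def QQ_def vimage_def Int_def mult.assoc conj_commute)
  ultimately have "prob {\<omega>\<in>space M. (\<lambda>i\<in>K0. X i \<omega>) \<in> Q0 \<and> (\<lambda>i\<in>K1. X i \<omega>) \<in> Q1 \<and> (\<lambda>i\<in>K2. X i \<omega>) \<in> Q2}
    = prob {\<omega>\<in>space M. (\<lambda>i\<in>K0. X i \<omega>) \<in> Q0} * prob {\<omega>\<in>space M. (\<lambda>i\<in>K1. X i \<omega>) \<in> Q1}
      * prob {\<omega>\<in>space M. (\<lambda>i\<in>K2. X i \<omega>) \<in> Q2}"
    by simp
  then show ?thesis
    by (simp add: emeasure_eq_measure ennreal_mult[symmetric])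
qed

end

definition SegB :: "(int \<Rightarrow> real) \<Rightarrow> real \<Rightarrow> nat \<Rightarrow> (nat \<Rightarrow> real) set \<Rightarrow> bool" where
  "SegB r h n B = (Seg r h n \<and> restrict (\<lambda>k. Vw r (- int k)) {0..n} \<in> B)"

lemma event1_pos:
  assumes h: "h > 0" and e: "event1 r h"
  shows "\<exists>t::nat. upT r h h = Some (int t) \<and> t < m1 r h"
proof -
  obtain t' where t': "upT r h h = Some t'" "t' \<ge> 0" using e unfolding event1_def by blast
  define S where "S = {x::int. x \<le> int (m1 r h) \<and> Vw r x - Vw r (int (m1 r h)) \<ge> h}"
  have u: "upT r h h = (if S = {} then None else Some (GREATEST x. x \<in> S))"
    unfolding upT_def S_def by (simp add: Let_def)
  have Sne: "S \<noteq> {}" using t' u by (auto split: if_splits)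
  then obtain x1 where x1: "x1 \<in> S" by auto
  have gr: "(GREATEST x. x \<in> S) \<in> S"
    using int_greatest[OF x1, of "int (m1 r h)"] by (auto simp: S_def)
  have "(GREATEST x. x \<in> S) = t'" using t' u Sne by simp
  then have "t' \<in> S" using gr by simp
  then have "t' \<le> int (m1 r h)" "h \<le> Vw r t' - Vw r (int (m1 r h))" unfolding S_def by auto
  then have "t' < int (m1 r h)" using h by (cases "t' = int (m1 r h)") auto
  then show ?thesis using t' by (intro exI[of _ "nat t'"]) auto
qed

lemma path1_eq: "m1 r h = m \<Longrightarrow> path1 r h = (\<lambda>k. Vw (\<lambda>i. r (i + int m)) (- int k))"
  by (auto simp: path1_def Vw_shift fun_eq_iff)

lemma decomp:
  assumes h: "h > 0"
  shows "(event1 r h \<and> len1 r h = n \<and> restrict (path1 r h) {0..n} \<in> B) \<longleftrightarrow>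
    (\<exists>t. Apre r h t \<and> SegB (\<lambda>i. r (i + int (t + n))) h n B \<and> Csuf (\<lambda>i. r (i + int (t + n))) h)"
proof
  assume a: "event1 r h \<and> len1 r h = n \<and> restrict (path1 r h) {0..n} \<in> B"
  obtain t where t: "upT r h h = Some (int t)" "t < m1 r h" using event1_pos[OF h] a by blast
  have nd: "nat (int (m1 r h) - int t) = m1 r h - t" using t(2) by (subst nat_diff_distrib) auto
  have n: "n = m1 r h - t" using a nd t(1) unfolding len1_def by simp
  have m: "m1 r h = t + n" using n t(2) by simp
  have tm: "t < t + n" using t(2) m by simp
  have c: "Apre r h t \<and> Seg (\<lambda>i. r (i + int (t + n))) h n \<and> Csuf (\<lambda>i. r (i + int (t + n))) h"
    using core[OF h tm, of r] a t m by simp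
  have "restrict (\<lambda>k. Vw (\<lambda>i. r (i + int (t + n))) (- int k)) {0..n} \<in> B"
    using a path1_eq[OF m] by simp
  then show "\<exists>t. Apre r h t \<and> SegB (\<lambda>i. r (i + int (t + n))) h n B \<and> Csuf (\<lambda>i. r (i + int (t + n))) h"
    using c unfolding SegB_def by blast
next
  assume "\<exists>t. Apre r h t \<and> SegB (\<lambda>i. r (i + int (t + n))) h n B \<and> Csuf (\<lambda>i. r (i + int (t + n))) h"
  then obtain t where a: "Apre r h t" "SegB (\<lambda>i. r (i + int (t + n))) h n B" "Csuf (\<lambda>i. r (i + int (t + n))) h"
    by blast
  have n1: "1 \<le> n" using a(2) unfolding SegB_def Seg_def by simp
  have tm: "t < t + n" using n1 by simp
  have c: "event1 r h \<and> upT r h h = Some (int t) \<and> m1 r h = t + n"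
    using core[OF h tm, of r] a unfolding SegB_def by simp
  have "len1 r h = n" using c unfolding len1_def by simp
  moreover have "restrict (path1 r h) {0..n} \<in> B" using c a(2) path1_eq[of r h "t + n"] unfolding SegB_def by simp
  ultimately show "event1 r h \<and> len1 r h = n \<and> restrict (path1 r h) {0..n} \<in> B" using c by simp
qed

lemma decomp_unique:
  assumes h: "h > 0"
    and a: "Apre r h t \<and> SegB (\<lambda>i. r (i + int (t + n))) h n B \<and> Csuf (\<lambda>i. r (i + int (t + n))) h"
    and b: "Apre r h t' \<and> SegB (\<lambda>i. r (i + int (t' + n))) h n B \<and> Csuf (\<lambda>i. r (i + int (t' + n))) h"
  shows "t = t'"
proof -
  have n1: "1 \<le> n" using a unfolding SegB_def Seg_def by simp
  have "upT r h h = Some (int t)" using core[of h t "t + n" r] h n1 a unfolding SegB_def by simp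
  moreover have "upT r h h = Some (int t')" using core[of h t' "t' + n" r] h n1 b unfolding SegB_def by simp
  ultimately show ?thesis by simp
qed

lemma event2_decomp:
  assumes h: "h > 0"
  shows "(event2 r h \<and> len2 r h = n \<and> restrict (path2 r) {0..n} \<in> B) \<longleftrightarrow> SegB r h n B"
  using event2_iff[OF h, of r n] unfolding SegB_def path2_def by blast

lemma Vw_restrict_shift:
  assumes "\<And>i. (0 < i \<and> i \<le> x) \<or> (x < i \<and> i \<le> 0) \<Longrightarrow> i + m \<in> K"
  shows "Vw (\<lambda>i. restrict r K (i + m)) x = Vw (\<lambda>i. r (i + m)) x"
  by (rule Vw_cong) (use assms in auto)

lemma SegB_restrict:
  assumes "\<And>i. - int n < i \<Longrightarrow> i \<le> 0 \<Longrightarrow> i + m \<in> K"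
  shows "SegB (\<lambda>i. restrict r K (i + m)) h n B = SegB (\<lambda>i. r (i + m)) h n B"
proof -
  have e: "Vw (\<lambda>i. restrict r K (i + m)) (- int k) = Vw (\<lambda>i. r (i + m)) (- int k)" if "k \<le> n" for k
  proof (rule Vw_restrict_shift)
    fix i assume "(0 < i \<and> i \<le> - int k) \<or> (- int k < i \<and> i \<le> 0)"
    then have "- int n < i" "i \<le> 0" using that by auto
    then show "i + m \<in> K" by (rule assms)
  qed
  have r: "restrict (\<lambda>k. Vw (\<lambda>i. restrict r K (i + m)) (- int k)) {0..n}
         = restrict (\<lambda>k. Vw (\<lambda>i. r (i + m)) (- int k)) {0..n}"
    by (rule restrict_ext) (rule e, simp)
  show ?thesis unfolding SegB_def Seg_def r using e by (auto simp: less_imp_le_nat)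
qed

lemma Csuf_restrict:
  assumes "\<And>i. 0 < i \<Longrightarrow> i + m \<in> K"
  shows "Csuf (\<lambda>i. restrict r K (i + m)) h = Csuf (\<lambda>i. r (i + m)) h"
proof -
  have e: "Vw (\<lambda>i. restrict r K (i + m)) (int k) = Vw (\<lambda>i. r (i + m)) (int k)" for k
  proof (rule Vw_restrict_shift)
    fix i assume "(0 < i \<and> i \<le> int k) \<or> (int k < i \<and> i \<le> 0)"
    then have "0 < i" by auto
    then show "i + m \<in> K" by (rule assms)
  qed
  show ?thesis unfolding Csuf_def e ..
qed

lemma Apre_restrict:
  assumes "{0<..int t} \<subseteq> K"
  shows "Apre (restrict r K) h t = Apre r h t"
proof -
  have e: "Vw (restrict r K) (int j) = Vw r (int j)" if "j \<le> t" for j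
  proof (rule Vw_cong)
    fix k assume "(0 < k \<and> k \<le> int j) \<or> (int j < k \<and> k \<le> 0)"
    then have "k \<in> {0<..int t}" using that by auto
    then have "k \<in> K" using assms by blast
    then show "restrict r K k = r k" by simp
  qed
  show ?thesis unfolding Apre_def using e by (auto intro!: all_cong)
qed

lemma SegB_meas[measurable]:
  assumes [measurable]: "B \<in> sets (PiM {0..n} (\<lambda>_. borel))"
  shows "Measurable.pred (PiM I (\<lambda>_. (borel :: real measure))) (\<lambda>x. SegB x h n B)"
  unfolding SegB_def by measurable

lemma SegB_shift_meas[measurable]:
  assumes [measurable]: "B \<in> sets (PiM {0..n} (\<lambda>_. borel))"
  shows "Measurable.pred (PiM I (\<lambda>_. (borel :: real measure))) (\<lambda>x. SegB (\<lambda>i. x (i + m)) h n B)"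
  unfolding SegB_def by measurable

lemma SegB_restrict0:
  assumes "\<And>i. - int n < i \<Longrightarrow> i \<le> 0 \<Longrightarrow> i \<in> K"
  shows "SegB (restrict r K) h n B = SegB r h n B"
  using SegB_restrict[of n 0 K r h B] assms by (simp add: restrict_def)

lemma Csuf_restrict0:
  assumes "\<And>i. 0 < i \<Longrightarrow> i \<in> K"
  shows "Csuf (restrict r K) h = Csuf r h"
  using Csuf_restrict[of 0 K r h] assms by (simp add: restrict_def)

context iidw
begin

lemma restrict_in_space: "(\<lambda>i\<in>K. X i \<omega>) \<in> space (PiM K (\<lambda>_. borel))"
  by (simp add: space_PiM)

lemma pred_block:
  assumes "Measurable.pred (PiM K (\<lambda>_. borel)) P"
  shows "Measurable.pred M (\<lambda>\<omega>. P (\<lambda>i\<in>K. X i \<omega>))"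
proof -
  have "(\<lambda>\<omega>. \<lambda>i\<in>K. X i \<omega>) \<in> measurable M (PiM K (\<lambda>_. borel))"
    by (rule measurable_restrict) simp
  then show ?thesis using assms by (rule measurable_compose)
qed

lemma pred_SegB:
  assumes B: "B \<in> sets (PiM {0..n} (\<lambda>_. borel))"
  shows "Measurable.pred M (\<lambda>\<omega>. SegB (\<lambda>i. X i \<omega>) h n B)"
proof -
  have "Measurable.pred M (\<lambda>\<omega>. SegB (\<lambda>i\<in>{- int n<..0}. X i \<omega>) h n B)"
    by (rule pred_block) (rule SegB_meas[OF B])
  moreover have "(\<lambda>\<omega>. SegB (\<lambda>i\<in>{- int n<..0}. X i \<omega>) h n B) = (\<lambda>\<omega>. SegB (\<lambda>i. X i \<omega>) h n B)"
    by (rule ext, rule SegB_restrict0) auto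
  ultimately show ?thesis by simp
qed

lemma pred_Csuf: "Measurable.pred M (\<lambda>\<omega>. Csuf (\<lambda>i. X i \<omega>) h)"
proof -
  have "Measurable.pred M (\<lambda>\<omega>. Csuf (\<lambda>i\<in>{0<..}. X i \<omega>) h)"
    by (rule pred_block) (rule Csuf_meas)
  moreover have "(\<lambda>\<omega>. Csuf (\<lambda>i\<in>{0<..}. X i \<omega>) h) = (\<lambda>\<omega>. Csuf (\<lambda>i. X i \<omega>) h)"
    by (rule ext, rule Csuf_restrict0) auto
  ultimately show ?thesis by simp
qed

lemma pred_Apre: "Measurable.pred M (\<lambda>\<omega>. Apre (\<lambda>i. X i \<omega>) h t)"
proof -
  have "Measurable.pred M (\<lambda>\<omega>. Apre (\<lambda>i\<in>{0<..int t}. X i \<omega>) h t)"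
    by (rule pred_block) (rule Apre_meas)
  moreover have "(\<lambda>\<omega>. Apre (\<lambda>i\<in>{0<..int t}. X i \<omega>) h t) = (\<lambda>\<omega>. Apre (\<lambda>i. X i \<omega>) h t)"
    by (rule ext, rule Apre_restrict) auto
  ultimately show ?thesis by simp
qed

lemma seg_shift_emeasure:
  assumes B: "B \<in> sets (PiM {0..n} (\<lambda>_. borel))"
  shows "emeasure M {\<omega>\<in>space M. SegB (\<lambda>i. X (i + m) \<omega>) h n B} = emeasure M {\<omega>\<in>space M. SegB (\<lambda>i. X i \<omega>) h n B}"
proof (cases "n = 0")
  case True
  then show ?thesis by (simp add: SegB_def Seg_def)
next
  case False
  define J where "J = {- int n<..0}"
  have J: "J \<noteq> {}" using False unfolding J_def by auto
  define Q where "Q = {x\<in>space (PiM J (\<lambda>_. borel)). SegB x h n B}"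
  have Q: "Q \<in> sets (PiM J (\<lambda>_. borel))" unfolding Q_def using SegB_meas[OF B] by measurable
  have e: "{\<omega>\<in>space M. SegB (\<lambda>i. X (i + m') \<omega>) h n B} = {\<omega>\<in>space M. (\<lambda>i\<in>J. X (i + m') \<omega>) \<in> Q}" for m'
  proof -
    have "SegB (\<lambda>i\<in>J. X (i + m') \<omega>) h n B = SegB (\<lambda>i. X (i + m') \<omega>) h n B" for \<omega>
      by (rule SegB_restrict0) (auto simp: J_def)
    then show ?thesis unfolding Q_def by (auto simp: space_PiM)
  qed
  show ?thesis using e[of m] e[of 0] shift_emeasure[OF J Q, of m] by simp
qed

lemma csuf_shift_emeasure:
  "emeasure M {\<omega>\<in>space M. Csuf (\<lambda>i. X (i + m) \<omega>) h} = emeasure M {\<omega>\<in>space M. Csuf (\<lambda>i. X i \<omega>) h}"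
proof -
  define J :: "int set" where "J = {0<..}"
  have J: "J \<noteq> {}" unfolding J_def by (auto intro: exI[of _ 1])
  define Q where "Q = {x\<in>space (PiM J (\<lambda>_. borel)). Csuf x h}"
  have Q: "Q \<in> sets (PiM J (\<lambda>_. borel))" unfolding Q_def by measurable
  have e: "{\<omega>\<in>space M. Csuf (\<lambda>i. X (i + m') \<omega>) h} = {\<omega>\<in>space M. (\<lambda>i\<in>J. X (i + m') \<omega>) \<in> Q}" for m'
  proof -
    have "Csuf (\<lambda>i\<in>J. X (i + m') \<omega>) h = Csuf (\<lambda>i. X (i + m') \<omega>) h" for \<omega>
      by (rule Csuf_restrict0) (auto simp: J_def)
    then show ?thesis unfolding Q_def by (auto simp: space_PiM)
  qed
  show ?thesis using e[of m] e[of 0] shift_emeasure[OF J Q, of m] by simp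
qed


lemma E1n_repr:
  assumes h: "h > 0" and B: "B \<in> sets (PiM {0..n} (\<lambda>_. borel))"
  defines "F \<equiv> \<lambda>t. {\<omega>\<in>space M. Apre (\<lambda>i. X i \<omega>) h t \<and> SegB (\<lambda>i. X (i + int (t + n)) \<omega>) h n B
                    \<and> Csuf (\<lambda>i. X (i + int (t + n)) \<omega>) h}"
  shows "{\<omega>\<in>space M. event1 (\<lambda>i. X i \<omega>) h \<and> len1 (\<lambda>i. X i \<omega>) h = n \<and> restrict (path1 (\<lambda>i. X i \<omega>) h) {0..n} \<in> B}
     = (\<Union>t. F t)"
    and "disjoint_family F"
    and "\<And>t. F t \<in> sets M"
    and "\<And>t. emeasure M (F t) = emeasure M {\<omega>\<in>space M. Apre (\<lambda>i. X i \<omega>) h t}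
             * emeasure M {\<omega>\<in>space M. SegB (\<lambda>i. X i \<omega>) h n B} * emeasure M {\<omega>\<in>space M. Csuf (\<lambda>i. X i \<omega>) h}"
proof -
  show "{\<omega>\<in>space M. event1 (\<lambda>i. X i \<omega>) h \<and> len1 (\<lambda>i. X i \<omega>) h = n \<and> restrict (path1 (\<lambda>i. X i \<omega>) h) {0..n} \<in> B}
     = (\<Union>t. F t)"
    unfolding F_def using decomp[OF h] by blast
  show "disjoint_family F"
    unfolding disjoint_family_on_def F_def using decomp_unique[OF h] by blast
next
  fix t
  define K0 where "K0 = {0<..int t}"
  define K1 where "K1 = {int t<..int (t + n)}"
  define K2 where "K2 = {int (t + n)<..}"
  define Q0 where "Q0 = {x\<in>space (PiM K0 (\<lambda>_. borel)). Apre x h t}"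
  define Q1 where "Q1 = {x\<in>space (PiM K1 (\<lambda>_. borel)). SegB (\<lambda>i. x (i + int (t + n))) h n B}"
  define Q2 where "Q2 = {x\<in>space (PiM K2 (\<lambda>_. borel)). Csuf (\<lambda>i. x (i + int (t + n))) h}"
  have Q0: "Q0 \<in> sets (PiM K0 (\<lambda>_. borel))" unfolding Q0_def by measurable
  have Q1: "Q1 \<in> sets (PiM K1 (\<lambda>_. borel))" unfolding Q1_def using SegB_shift_meas[OF B] by measurable
  have Q2: "Q2 \<in> sets (PiM K2 (\<lambda>_. borel))" unfolding Q2_def by measurable
  have e0: "Apre (\<lambda>i\<in>K0. X i \<omega>) h t = Apre (\<lambda>i. X i \<omega>) h t" for \<omega>
    by (rule Apre_restrict) (simp add: K0_def)
  have e1: "SegB (\<lambda>i. (\<lambda>i\<in>K1. X i \<omega>) (i + int (t + n))) h n B = SegB (\<lambda>i. X (i + int (t + n)) \<omega>) h n B" for \<omega>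
    by (rule SegB_restrict) (auto simp: K1_def)
  have e2: "Csuf (\<lambda>i. (\<lambda>i\<in>K2. X i \<omega>) (i + int (t + n))) h = Csuf (\<lambda>i. X (i + int (t + n)) \<omega>) h" for \<omega>
    by (rule Csuf_restrict) (auto simp: K2_def)
  have S0: "{\<omega>\<in>space M. (\<lambda>i\<in>K0. X i \<omega>) \<in> Q0} = {\<omega>\<in>space M. Apre (\<lambda>i. X i \<omega>) h t}"
    unfolding Q0_def using e0 restrict_in_space by blast
  have S1: "{\<omega>\<in>space M. (\<lambda>i\<in>K1. X i \<omega>) \<in> Q1} = {\<omega>\<in>space M. SegB (\<lambda>i. X (i + int (t + n)) \<omega>) h n B}"
    unfolding Q1_def using e1 restrict_in_space by blast
  have S2: "{\<omega>\<in>space M. (\<lambda>i\<in>K2. X i \<omega>) \<in> Q2} = {\<omega>\<in>space M. Csuf (\<lambda>i. X (i + int (t + n)) \<omega>) h}"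
    unfolding Q2_def using e2 restrict_in_space by blast
  have SF: "F t = {\<omega>\<in>space M. (\<lambda>i\<in>K0. X i \<omega>) \<in> Q0 \<and> (\<lambda>i\<in>K1. X i \<omega>) \<in> Q1 \<and> (\<lambda>i\<in>K2. X i \<omega>) \<in> Q2}"
    using S0 S1 S2 unfolding F_def by blast
  have D: "K0 \<inter> K1 = {}" "K0 \<inter> K2 = {}" "K1 \<inter> K2 = {}" unfolding K0_def K1_def K2_def by auto
  have f0: "(\<lambda>\<omega>. \<lambda>i\<in>K0. X i \<omega>) \<in> measurable M (PiM K0 (\<lambda>_. borel))" by (rule measurable_restrict) simp
  have f1: "(\<lambda>\<omega>. \<lambda>i\<in>K1. X i \<omega>) \<in> measurable M (PiM K1 (\<lambda>_. borel))" by (rule measurable_restrict) simp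
  have f2: "(\<lambda>\<omega>. \<lambda>i\<in>K2. X i \<omega>) \<in> measurable M (PiM K2 (\<lambda>_. borel))" by (rule measurable_restrict) simp
  show "F t \<in> sets M" unfolding SF using f0 f1 f2 Q0 Q1 Q2 by measurable
  show "emeasure M (F t) = emeasure M {\<omega>\<in>space M. Apre (\<lambda>i. X i \<omega>) h t}
             * emeasure M {\<omega>\<in>space M. SegB (\<lambda>i. X i \<omega>) h n B} * emeasure M {\<omega>\<in>space M. Csuf (\<lambda>i. X i \<omega>) h}"
    unfolding SF three_blocks[OF D Q0 Q1 Q2] S0 S1 S2 seg_shift_emeasure[OF B] csuf_shift_emeasure ..
qed

lemma e1_eq:
  assumes h: "h > 0" and B: "B \<in> sets (PiM {0..n} (\<lambda>_. borel))"
  shows "emeasure M {\<omega>\<in>space M. event1 (\<lambda>i. X i \<omega>) h \<and> len1 (\<lambda>i. X i \<omega>) h = n \<and> restrict (path1 (\<lambda>i. X i \<omega>) h) {0..n} \<in> B}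
    = ((\<Sum>t. emeasure M {\<omega>\<in>space M. Apre (\<lambda>i. X i \<omega>) h t}) * emeasure M {\<omega>\<in>space M. Csuf (\<lambda>i. X i \<omega>) h})
      * emeasure M {\<omega>\<in>space M. SegB (\<lambda>i. X i \<omega>) h n B}"
    and "{\<omega>\<in>space M. event1 (\<lambda>i. X i \<omega>) h \<and> len1 (\<lambda>i. X i \<omega>) h = n \<and> restrict (path1 (\<lambda>i. X i \<omega>) h) {0..n} \<in> B} \<in> sets M"
proof -
  note R = E1n_repr[OF h B]
  let ?c = "emeasure M {\<omega>\<in>space M. SegB (\<lambda>i. X i \<omega>) h n B} * emeasure M {\<omega>\<in>space M. Csuf (\<lambda>i. X i \<omega>) h}"
  show "{\<omega>\<in>space M. event1 (\<lambda>i. X i \<omega>) h \<and> len1 (\<lambda>i. X i \<omega>) h = n \<and> restrict (path1 (\<lambda>i. X i \<omega>) h) {0..n} \<in> B} \<in> sets M"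
    unfolding R(1) using R(3) by blast
  have "emeasure M {\<omega>\<in>space M. event1 (\<lambda>i. X i \<omega>) h \<and> len1 (\<lambda>i. X i \<omega>) h = n \<and> restrict (path1 (\<lambda>i. X i \<omega>) h) {0..n} \<in> B}
     = (\<Sum>t. emeasure M ({\<omega>\<in>space M. Apre (\<lambda>i. X i \<omega>) h t \<and> SegB (\<lambda>i. X (i + int (t + n)) \<omega>) h n B
                    \<and> Csuf (\<lambda>i. X (i + int (t + n)) \<omega>) h}))"
    unfolding R(1) by (rule suminf_emeasure[symmetric]) (use R(2,3) in auto)
  also have "\<dots> = (\<Sum>t. ?c * emeasure M {\<omega>\<in>space M. Apre (\<lambda>i. X i \<omega>) h t})"
    unfolding R(4) by (simp add: mult.commute mult.left_commute)
  also have "\<dots> = ?c * (\<Sum>t. emeasure M {\<omega>\<in>space M. Apre (\<lambda>i. X i \<omega>) h t})"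
    by (rule ennreal_suminf_cmult)
  finally show "emeasure M {\<omega>\<in>space M. event1 (\<lambda>i. X i \<omega>) h \<and> len1 (\<lambda>i. X i \<omega>) h = n \<and> restrict (path1 (\<lambda>i. X i \<omega>) h) {0..n} \<in> B}
    = ((\<Sum>t. emeasure M {\<omega>\<in>space M. Apre (\<lambda>i. X i \<omega>) h t}) * emeasure M {\<omega>\<in>space M. Csuf (\<lambda>i. X i \<omega>) h})
      * emeasure M {\<omega>\<in>space M. SegB (\<lambda>i. X i \<omega>) h n B}"
    by (simp add: mult.commute mult.left_commute)
qed


lemma csuf_pos:
  assumes pos: "measure M {\<omega> \<in> space M. X 0 \<omega> > 0} > 0" and h: "h > 0"
  shows "0 < emeasure M {\<omega>\<in>space M. Csuf (\<lambda>i. X i \<omega>) h}"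
proof -
  define A where "A k = {\<omega>\<in>space M. inverse (real (Suc k)) < X 0 \<omega>}" for k
  have Am: "A k \<in> sets M" for k unfolding A_def by measurable
  have "\<exists>k. emeasure M (A k) \<noteq> 0"
  proof (rule ccontr)
    assume "\<not> ?thesis"
    then have "emeasure M (\<Union>k. A k) = 0" by (intro emeasure_UN_eq_0) (auto simp: Am)
    moreover have "(\<Union>k. A k) = {\<omega> \<in> space M. X 0 \<omega> > 0}"
    proof
      show "(\<Union>k. A k) \<subseteq> {\<omega> \<in> space M. X 0 \<omega> > 0}"
      proof
        fix \<omega> assume "\<omega> \<in> (\<Union>k. A k)"
        then obtain k where w: "\<omega> \<in> space M" and l: "inverse (real (Suc k)) < X 0 \<omega>" unfolding A_def by auto
        have "0 < inverse (real (Suc k))" by simp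
        with l have "0 < X 0 \<omega>" by linarith
        with w show "\<omega> \<in> {\<omega> \<in> space M. X 0 \<omega> > 0}" by simp
      qed
    next
      show "{\<omega> \<in> space M. X 0 \<omega> > 0} \<subseteq> (\<Union>k. A k)"
      proof
        fix \<omega> assume w: "\<omega> \<in> {\<omega> \<in> space M. X 0 \<omega> > 0}"
        then obtain n :: nat where n: "n > 0" "inverse (real n) < X 0 \<omega>"
          using ex_inverse_of_nat_less[of "X 0 \<omega>"] by auto
        then have "Suc (n - 1) = n" by simp
        then have "\<omega> \<in> A (n - 1)" unfolding A_def using w n by simp
        then show "\<omega> \<in> (\<Union>k. A k)" by blast
      qed
    qed
    ultimately have "emeasure M {\<omega> \<in> space M. X 0 \<omega> > 0} = 0" by simp
    then show False using pos by (simp add: measure_def)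
  qed
  then obtain k where k: "emeasure M (A k) \<noteq> 0" by blast
  define \<epsilon> where "\<epsilon> = inverse (real (Suc k))"
  have epos: "\<epsilon> > 0" unfolding \<epsilon>_def by simp
  define p where "p = prob (A k)"
  have ppos: "p > 0" using k unfolding p_def by (simp add: emeasure_eq_measure zero_less_measure_iff)
  obtain N :: nat where N: "h < real N * \<epsilon>" using reals_Archimedean3[OF epos] by blast
  have N1: "N \<ge> 1"
  proof (rule ccontr)
    assume "\<not> N \<ge> 1" then have "N = 0" by simp
    then show False using N h by simp
  qed
  define J where "J = {1..int N}"
  have Jne: "J \<noteq> {}" and Jfin: "finite J" using N1 unfolding J_def by auto
  have iv: "prob (\<Inter>i\<in>J. X i -` {\<epsilon><..} \<inter> space M) = (\<Prod>i\<in>J. prob (X i -` {\<epsilon><..} \<inter> space M))"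
    by (rule indep_varsD[OF ind]) (use Jne Jfin in auto)
  have each: "prob (X i -` {\<epsilon><..} \<inter> space M) = p" for i
  proof -
    have d: "distr M borel (X i) = distr M borel (X 0)" by (rule idd)
    have "prob (X i -` {\<epsilon><..} \<inter> space M) = measure (distr M borel (X i)) {\<epsilon><..}"
      by (rule measure_distr[symmetric]) auto
    also have "\<dots> = measure (distr M borel (X 0)) {\<epsilon><..}" by (simp only: d)
    also have "\<dots> = prob (X 0 -` {\<epsilon><..} \<inter> space M)" by (rule measure_distr) auto
    also have "X 0 -` {\<epsilon><..} \<inter> space M = A k" unfolding A_def \<epsilon>_def by auto
    finally show ?thesis unfolding p_def .
  qed
  have R_eq: "(\<Inter>i\<in>J. X i -` {\<epsilon><..} \<inter> space M) = {\<omega>\<in>space M. \<forall>i\<in>J. \<epsilon> < X i \<omega>}"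
    using Jne by auto
  have cardJ: "card J = N" unfolding J_def by simp
  have probR: "prob {\<omega>\<in>space M. \<forall>i\<in>J. \<epsilon> < X i \<omega>} = p ^ N"
    using iv unfolding R_eq each cardJ[symmetric] by simp
  have sub: "{\<omega>\<in>space M. \<forall>i\<in>J. \<epsilon> < X i \<omega>} \<subseteq> {\<omega>\<in>space M. Csuf (\<lambda>i. X i \<omega>) h}"
  proof safe
    fix \<omega> assume w: "\<omega> \<in> space M" "\<forall>i\<in>J. \<epsilon> < X i \<omega>"
    show "Csuf (\<lambda>i. X i \<omega>) h" unfolding Csuf_def
    proof (intro exI[of _ N] conjI allI impI)
      have "Vw (\<lambda>i. X i \<omega>) (int N) = (\<Sum>k\<in>J. X k \<omega>)" using N1 unfolding Vw_def J_def by simp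
      moreover have "(\<Sum>k\<in>J. \<epsilon>) \<le> (\<Sum>k\<in>J. X k \<omega>)" using w(2) by (intro sum_mono) (simp add: less_imp_le)
      moreover have "(\<Sum>k\<in>J. \<epsilon>) = real N * \<epsilon>" using cardJ by simp
      ultimately show "h \<le> Vw (\<lambda>i. X i \<omega>) (int N)" using N by linarith
    next
      fix x :: nat assume xN: "x \<le> N"
      show "0 \<le> Vw (\<lambda>i. X i \<omega>) (int x)"
      proof (cases "x = 0")
        case True then show ?thesis by simp
      next
        case False
        then have "Vw (\<lambda>i. X i \<omega>) (int x) = (\<Sum>k\<in>{1..int x}. X k \<omega>)" unfolding Vw_def by simp
        also have "\<dots> \<ge> 0"
        proof (rule sum_nonneg)
          fix k assume "k \<in> {1..int x}"
          then have "k \<in> J" using xN unfolding J_def by auto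
          then show "0 \<le> X k \<omega>" using w(2) epos by force
        qed
        finally show ?thesis .
      qed
    qed
  qed
  have "0 < emeasure M {\<omega>\<in>space M. \<forall>i\<in>J. \<epsilon> < X i \<omega>}"
    using probR ppos by (simp add: emeasure_eq_measure)
  also have "\<dots> \<le> emeasure M {\<omega>\<in>space M. Csuf (\<lambda>i. X i \<omega>) h}"
    by (rule emeasure_mono[OF sub]) (use pred_Csuf in \<open>simp add: pred_def\<close>)
  finally show ?thesis .
qed

end

theorem proposition5p1:
  fixes M :: "'a measure" and X :: "int \<Rightarrow> 'a \<Rightarrow> real" and h :: real
  assumes "prob_space M"
    and "prob_space.indep_vars M (\<lambda>_. borel) X UNIV"
    and "\<And>i. distr M borel (X i) = distr M borel (X 0)"
    and "measure M {\<omega> \<in> space M. X 0 \<omega> > 0} > 0"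
    and "measure M {\<omega> \<in> space M. X 0 \<omega> < 0} > 0"
    and "h > 0"
  shows "\<forall>n::nat. \<forall>B \<in> sets (PiM {0..n} (\<lambda>_. borel)).
    measure M {\<omega> \<in> space M. event1 (\<lambda>i. X i \<omega>) h \<and> len1 (\<lambda>i. X i \<omega>) h = n
                  \<and> restrict (path1 (\<lambda>i. X i \<omega>) h) {0..n} \<in> B}
      / measure M {\<omega> \<in> space M. event1 (\<lambda>i. X i \<omega>) h}
    = measure M {\<omega> \<in> space M. event2 (\<lambda>i. X i \<omega>) h \<and> len2 (\<lambda>i. X i \<omega>) h = n
                  \<and> restrict (path2 (\<lambda>i. X i \<omega>)) {0..n} \<in> B}
      / measure M {\<omega> \<in> space M. event2 (\<lambda>i. X i \<omega>) h}"
proof -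
  have "iidw M X" unfolding iidw_def iidw_axioms_def using assms(1,2,3) by blast
  then interpret iidw M X .
  have h: "h > 0" by (rule assms(6))
  define a where "a = (\<Sum>t. emeasure M {\<omega>\<in>space M. Apre (\<lambda>i. X i \<omega>) h t})"
  define c where "c = emeasure M {\<omega>\<in>space M. Csuf (\<lambda>i. X i \<omega>) h}"
  define K where "K = a * c"
  define E1n where "E1n n B = {\<omega> \<in> space M. event1 (\<lambda>i. X i \<omega>) h \<and> len1 (\<lambda>i. X i \<omega>) h = n
                  \<and> restrict (path1 (\<lambda>i. X i \<omega>) h) {0..n} \<in> B}" for n B
  define E2n where "E2n n B = {\<omega> \<in> space M. event2 (\<lambda>i. X i \<omega>) h \<and> len2 (\<lambda>i. X i \<omega>) h = n
                  \<and> restrict (path2 (\<lambda>i. X i \<omega>)) {0..n} \<in> B}" for n B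
  define E1 where "E1 = {\<omega> \<in> space M. event1 (\<lambda>i. X i \<omega>) h}"
  define E2 where "E2 = {\<omega> \<in> space M. event2 (\<lambda>i. X i \<omega>) h}"
  have E2n_eq: "E2n n B = {\<omega>\<in>space M. SegB (\<lambda>i. X i \<omega>) h n B}" for n B
    unfolding E2n_def using event2_decomp[OF h] by blast
  have E2n_sets: "E2n n B \<in> sets M" if "B \<in> sets (PiM {0..n} (\<lambda>_. borel))" for n B
    unfolding E2n_eq using pred_SegB[OF that] by (simp add: pred_def)
  have E1n_sets: "E1n n B \<in> sets M" if "B \<in> sets (PiM {0..n} (\<lambda>_. borel))" for n B
    unfolding E1n_def by (rule e1_eq(2)[OF h that])
  have key: "emeasure M (E1n n B) = K * emeasure M (E2n n B)" if "B \<in> sets (PiM {0..n} (\<lambda>_. borel))" for n B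
    unfolding E1n_def e1_eq(1)[OF h that] E2n_eq K_def a_def c_def ..
  define Sp where "Sp (n::nat) = space (PiM {0..n} (\<lambda>_. borel :: real measure))" for n
  have Sp: "Sp n \<in> sets (PiM {0..n} (\<lambda>_. borel))" for n unfolding Sp_def by simp
  have inSp: "restrict f {0..n} \<in> Sp n" for f :: "nat \<Rightarrow> real" and n unfolding Sp_def by (simp add: space_PiM)
  have U1: "E1 = (\<Union>n. E1n n (Sp n))" unfolding E1_def E1n_def using inSp by blast
  have U2: "E2 = (\<Union>n. E2n n (Sp n))" unfolding E2_def E2n_def using inSp by blast
  have D1: "disjoint_family (\<lambda>n. E1n n (Sp n))" unfolding disjoint_family_on_def E1n_def by blast
  have D2: "disjoint_family (\<lambda>n. E2n n (Sp n))" unfolding disjoint_family_on_def E2n_def by blast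
  have tot1: "emeasure M E1 = (\<Sum>n. emeasure M (E1n n (Sp n)))"
    unfolding U1 by (rule suminf_emeasure[symmetric]) (use D1 E1n_sets[OF Sp] in auto)
  have tot2: "emeasure M E2 = (\<Sum>n. emeasure M (E2n n (Sp n)))"
    unfolding U2 by (rule suminf_emeasure[symmetric]) (use D2 E2n_sets[OF Sp] in auto)
  have tot: "emeasure M E1 = K * emeasure M E2"
    unfolding tot1 tot2 key[OF Sp] by (rule ennreal_suminf_cmult)
  have E2_sets: "E2 \<in> sets M" unfolding U2 using E2n_sets[OF Sp] by blast
  have a0: "emeasure M {\<omega>\<in>space M. Apre (\<lambda>i. X i \<omega>) h 0} = 1"
  proof -
    have "{\<omega>\<in>space M. Apre (\<lambda>i. X i \<omega>) h 0} = space M" unfolding Apre_def using h by auto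
    then show ?thesis by (simp add: emeasure_space_1)
  qed
  have "emeasure M {\<omega>\<in>space M. Apre (\<lambda>i. X i \<omega>) h 0} \<le> a"
    unfolding a_def using sum_le_suminf[OF summableI, of "{0}" "\<lambda>t. emeasure M {\<omega>\<in>space M. Apre (\<lambda>i. X i \<omega>) h t}"]
    by simp
  then have "1 \<le> a" using a0 by simp
  then have apos: "a > 0" using zero_less_one order_less_le_trans by blast
  have cpos: "c > 0" unfolding c_def by (rule csuf_pos[OF assms(4) h])
  have Kpos: "K > 0" unfolding K_def using apos cpos by (simp add: ennreal_zero_less_mult_iff)
  show ?thesis
  proof (intro allI ballI)
    fix n :: nat and B assume B: "B \<in> sets (PiM {0..n} (\<lambda>_. borel :: real measure))"
    have "measure M (E1n n B) / measure M E1 = measure M (E2n n B) / measure M E2"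
    proof (cases "emeasure M E2 = 0")
      case True
      have "E2n n B \<subseteq> E2" unfolding E2n_def E2_def by blast
      then have "emeasure M (E2n n B) \<le> emeasure M E2" by (rule emeasure_mono[OF _ E2_sets])
      then have z2: "emeasure M (E2n n B) = 0" using True by simp
      then have z1: "emeasure M (E1n n B) = 0" using key[OF B] by simp
      show ?thesis using z1 z2 by (simp add: measure_def)
    next
      case False
      have "K \<noteq> \<top>"
      proof
        assume "K = \<top>"
        then have "emeasure M E1 = \<top>" using tot False by (simp add: ennreal_top_mult)
        then show False by (simp add: emeasure_eq_measure)
      qed
      then obtain k where k: "K = ennreal k" "0 \<le> k" by (cases K) auto
      have kpos: "k > 0" using Kpos k by simp
      have m1: "measure M (E1n n B) = k * measure M (E2n n B)"
        using key[OF B] k by (simp add: measure_def enn2real_mult)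
      have m2: "measure M E1 = k * measure M E2"
        using tot k by (simp add: measure_def enn2real_mult)
      show ?thesis unfolding m1 m2 using kpos by simp
    qed
    then show "measure M {\<omega> \<in> space M. event1 (\<lambda>i. X i \<omega>) h \<and> len1 (\<lambda>i. X i \<omega>) h = n
                  \<and> restrict (path1 (\<lambda>i. X i \<omega>) h) {0..n} \<in> B}
      / measure M {\<omega> \<in> space M. event1 (\<lambda>i. X i \<omega>) h}
    = measure M {\<omega> \<in> space M. event2 (\<lambda>i. X i \<omega>) h \<and> len2 (\<lambda>i. X i \<omega>) h = n
                  \<and> restrict (path2 (\<lambda>i. X i \<omega>)) {0..n} \<in> B}
      / measure M {\<omega> \<in> space M. event2 (\<lambda>i. X i \<omega>) h}"
      unfolding E1n_def E2n_def E1_def E2_def .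
  qed
qed

end
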